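(* Let $(G;+)$ be a commutative groupoid and let $M, M'$ be multisets over $G$ with $|M| = |M'| \geq 5$. Then the deck of $M$ equals the deck of $M'$ if and only if $M = M'$. In particular, every multiset of cardinality at least $5$ over any commutative groupoid is reconstructible.
   Context: A (finite) multiset $M$ over a set $X$ is a function $\mathbf{1}_M \colon X \to \mathbb{N}$ with finite support; $|M| = \sum_x \mathbf{1}_M(x)$ is its cardinality. Multiset sum $\uplus$ adds multiplicities; the difference $M \setminus M'$ has multiplicities $\max(\mathbf{1}_M(x)-\mathbf{1}_{M'}(x),0)$. $\langle x_1,\dots,x_k\rangle$ denotes the multiset in which each element occurs as often as it appears in the list. A commutative groupoid is a set $G$ with a commutative binary operation $+$ (not necessarily associative). Cards and deck: for a multiset $M$ of cardinality $n \geq 2$ over $G$, fix $(m_1,\dots,m_n) \in G^n$ with $M = \langle m_1,\dots,m_n\rangle$; for $I = \{i,j\}$, $1 \le i<j \le n$, the card $M_I$ is $M \setminus \langle m_i, m_j\rangle \uplus \langle m_i + m_j\rangle$. The deck of $M$ is the multiset $\langle M_I : I \rangle$ of all $\binom{n}{2}$ cards (independent of the chosen tuple). $M$ is reconstructible if every multiset $M'$ over $G$ with the same deck equals $M$. *)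

theory Defs
  imports "HOL-Library.Multiset"
begin

definition comm_groupoid :: "('a \<Rightarrow> 'a \<Rightarrow> 'a) \<Rightarrow> bool" where
  "comm_groupoid f \<longleftrightarrow> (\<forall>x y. f x y = f y x)"

text \<open>Card of the tuple xs = (m_1,...,m_n) for I = {i,j} (0-based indices, i < j):
  remove m_i and m_j, add m_i + m_j.\<close>
definition card_of :: "('a \<Rightarrow> 'a \<Rightarrow> 'a) \<Rightarrow> 'a list \<Rightarrow> nat \<Rightarrow> nat \<Rightarrow> 'a multiset" where
  "card_of f xs i j = (mset xs - {# xs ! i, xs ! j #}) + {# f (xs ! i) (xs ! j) #}"

definition deck_list :: "('a \<Rightarrow> 'a \<Rightarrow> 'a) \<Rightarrow> 'a list \<Rightarrow> 'a multiset multiset" where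
  "deck_list f xs = image_mset (\<lambda>(i, j). card_of f xs i j)
      (mset [(i, j). i \<leftarrow> [0..<length xs], j \<leftarrow> [0..<length xs], i < j])"

definition deck :: "('a \<Rightarrow> 'a \<Rightarrow> 'a) \<Rightarrow> 'a multiset \<Rightarrow> 'a multiset multiset" where
  "deck f M = deck_list f (SOME xs. mset xs = M)"

end

theory Submission imports Defs begin

definition pairs_upto :: "nat \<Rightarrow> (nat \<times> nat) set" where
  "pairs_upto n = {(i,j). i < j \<and> j < n}"

fun pairsums :: "('a \<Rightarrow> 'a \<Rightarrow> 'a) \<Rightarrow> 'a list \<Rightarrow> 'a multiset" where
  "pairsums f [] = {#}"
| "pairsums f (a # as) = image_mset (f a) (mset as) + pairsums f as"

lemma finite_pairs_upto: "finite (pairs_upto n)"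
  by (rule finite_subset[of _ "{..<n} \<times> {..<n}"]) (auto simp: pairs_upto_def)

lemma pairs_upto_Suc: "pairs_upto (Suc n) = (\<lambda>j. (0, Suc j)) ` {..<n} \<union> (\<lambda>p. (Suc (fst p), Suc (snd p))) ` pairs_upto n"
proof (rule set_eqI)
  fix p :: "nat \<times> nat"
  obtain i j where p: "p = (i,j)" by (cases p)
  show "p \<in> pairs_upto (Suc n) \<longleftrightarrow> p \<in> (\<lambda>j. (0, Suc j)) ` {..<n} \<union> (\<lambda>p. (Suc (fst p), Suc (snd p))) ` pairs_upto n"
  proof
    assume "p \<in> pairs_upto (Suc n)"
    then have ij: "i < j" "j < Suc n" by (simp_all add: p pairs_upto_def)
    then obtain j' where j': "j = Suc j'" by (cases j) auto
    show "p \<in> (\<lambda>j. (0, Suc j)) ` {..<n} \<union> (\<lambda>p. (Suc (fst p), Suc (snd p))) ` pairs_upto n"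
    proof (cases i)
      case 0
      have "j' \<in> {..<n}" using ij j' by simp
      then have "(0, Suc j') \<in> (\<lambda>j. (0::nat, Suc j)) ` {..<n}" by (rule imageI)
      then show ?thesis unfolding p 0 j' by (rule UnI1)
    next
      case (Suc i')
      then have "(i', j') \<in> pairs_upto n" using ij j' by (simp add: pairs_upto_def)
      then have "(Suc (fst (i',j')), Suc (snd (i',j'))) \<in> (\<lambda>p. (Suc (fst p), Suc (snd p))) ` pairs_upto n" by (rule imageI)
      then show ?thesis unfolding p Suc j' by simp
    qed
  next
    assume "p \<in> (\<lambda>j. (0, Suc j)) ` {..<n} \<union> (\<lambda>p. (Suc (fst p), Suc (snd p))) ` pairs_upto n"
    then show "p \<in> pairs_upto (Suc n)" unfolding p pairs_upto_def by (elim UnE imageE) auto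
  qed
qed

lemma sum_pairs_upto_Suc:
  "(\<Sum>p\<in>pairs_upto (Suc n). h p) = (\<Sum>j<n. h (0, Suc j)) + (\<Sum>p\<in>pairs_upto n. h (Suc (fst p), Suc (snd p)))"
proof -
  have d: "(\<lambda>j. (0::nat, Suc j)) ` {..<n} \<inter> (\<lambda>p. (Suc (fst p), Suc (snd p))) ` pairs_upto n = {}" by auto
  have i1: "inj_on (\<lambda>j. (0::nat, Suc j)) {..<n}" by (auto simp: inj_on_def)
  have i2: "inj_on (\<lambda>p. (Suc (fst p), Suc (snd p))) (pairs_upto n)" by (auto simp: inj_on_def prod_eq_iff)
  show ?thesis
    unfolding pairs_upto_Suc
    by (subst sum.union_disjoint) (use d i1 i2 finite_pairs_upto in \<open>auto simp: sum.reindex o_def\<close>)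
qed

lemma count_mset_sum: "count (mset ys) x = (\<Sum>j<length ys. of_bool (ys!j = x))"
proof (induct ys)
  case Nil then show ?case by simp
next
  case (Cons a ys)
  show ?case using Cons by (simp only: length_Cons sum.lessThan_Suc_shift) simp
qed

lemma s_idx: "(\<Sum>p\<in>pairs_upto (length xs). of_bool (f (xs!fst p) (xs!snd p) = x)) = count (pairsums f xs) x"
proof (induct xs)
  case Nil then show ?case by (simp add: pairs_upto_def)
next
  case (Cons a as)
  have "count (image_mset (f a) (mset as)) x = (\<Sum>j<length as. of_bool (f a (as!j) = x))"
    using count_mset_sum[of "map (f a) as" x] by simp
  then show ?case using Cons by (simp add: sum_pairs_upto_Suc)
qed

lemma c_idx: "(\<Sum>p\<in>pairs_upto (length xs). of_bool (xs!fst p = x) + of_bool (xs!snd p = x)) = (length xs - 1) * count (mset xs) x"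
proof (induct xs)
  case Nil then show ?case by (simp add: pairs_upto_def)
next
  case (Cons a as)
  have e: "(\<Sum>j<length as. of_bool (as!j = x)) = count (mset as) x" by (simp add: count_mset_sum)
  have "(\<Sum>p\<in>pairs_upto (length (a#as)). of_bool ((a#as)!fst p = x) + of_bool ((a#as)!snd p = x))
     = length as * of_bool (a = x) + count (mset as) x + (length as - 1) * count (mset as) x"
    using Cons e by (simp add: sum_pairs_upto_Suc sum.distrib)
  also have "\<dots> = length as * count (mset (a#as)) x"
    by (cases "length as") (auto simp: algebra_simps)
  finally show ?case by simp
qed

lemma card_pairs_upto_Suc: "card (pairs_upto (Suc n)) = n + card (pairs_upto n)"
  using sum_pairs_upto_Suc[of "\<lambda>_. (1::nat)" n] by simp

lemma card_pairs_upto: "2 * card (pairs_upto n) = n * (n - 1)"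
proof (induct n)
  case 0 then show ?case by (simp add: pairs_upto_def)
next
  case (Suc n) then show ?case by (cases n) (auto simp: card_pairs_upto_Suc algebra_simps)
qed

lemma pairs_upto_0 [simp]: "pairs_upto 0 = {}" by (simp add: pairs_upto_def)

lemma size_pairsums: "size (pairsums f xs) = card (pairs_upto (length xs))"
  by (induct xs) (simp_all add: card_pairs_upto_Suc)

lemma card_of_count:
  assumes "i < j" "j < length xs"
  shows "count (card_of f xs i j) x + of_bool (xs!i = x) + of_bool (xs!j = x)
       = count (mset xs) x + of_bool (f (xs!i) (xs!j) = x)"
proof -
  have le: "count {#xs!i, xs!j#} z \<le> count (mset xs) z" for z
  proof -
    have "count {#xs!i, xs!j#} z = (\<Sum>k\<in>{i,j}. of_bool (xs!k = z))" using assms by auto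
    also have "\<dots> \<le> (\<Sum>k<length xs. of_bool (xs!k = z))"
      by (rule sum_mono2) (use assms in auto)
    finally show ?thesis by (simp add: count_mset_sum)
  qed
  show ?thesis using le[of x] unfolding card_of_def by auto
qed

lemma aux_L: "[(i, j). i \<leftarrow> xs, j \<leftarrow> ys, i < j] = filter (\<lambda>(i,j). i < j) (List.product xs ys)"
proof (induct xs)
  case Nil then show ?case by simp
next
  case (Cons a xs)
  have "[(a, j). j \<leftarrow> ys, a < j] = filter (\<lambda>(i,j). i < j) (map (Pair a) ys)"
    by (induct ys) auto
  then show ?case using Cons by simp
qed

lemma mset_L: "mset [(i, j). i \<leftarrow> [0..<n], j \<leftarrow> [0..<n], i < j] = mset_set (pairs_upto n)"
proof -
  have d: "distinct [(i, j). i \<leftarrow> [0..<n], j \<leftarrow> [0..<n], i < j]"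
    unfolding aux_L by (simp add: distinct_product)
  have s: "set [(i, j). i \<leftarrow> [0..<n], j \<leftarrow> [0..<n], i < j] = pairs_upto n"
    unfolding aux_L pairs_upto_def set_filter set_product by auto
  show ?thesis using mset_set_set[OF d] unfolding s by simp
qed

lemma T_deck:
  "sum_mset (image_mset (\<lambda>C. count C x) (deck_list f xs)) + (length xs - 1) * count (mset xs) x
   = card (pairs_upto (length xs)) * count (mset xs) x + count (pairsums f xs) x"
proof -
  let ?n = "length xs"
  let ?P = "pairs_upto ?n"
  have "sum_mset (image_mset (\<lambda>C. count C x) (deck_list f xs))
      = (\<Sum>p\<in>?P. count (card_of f xs (fst p) (snd p)) x)"
    unfolding deck_list_def mset_L by (simp add: sum_unfold_sum_mset image_mset.compositionality o_def case_prod_beta)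
  moreover have "(\<Sum>p\<in>?P. count (card_of f xs (fst p) (snd p)) x) + (\<Sum>p\<in>?P. of_bool (xs!fst p = x) + of_bool (xs!snd p = x))
      = (\<Sum>p\<in>?P. count (mset xs) x + of_bool (f (xs!fst p) (xs!snd p) = x))"
    unfolding sum.distrib[symmetric]
  proof (rule sum.cong)
    fix p assume "p \<in> ?P"
    then have "fst p < snd p" "snd p < ?n" by (auto simp: pairs_upto_def)
    from card_of_count[OF this, of f x]
    show "count (card_of f xs (fst p) (snd p)) x + (of_bool (xs ! fst p = x) + of_bool (xs ! snd p = x)) =
         count (mset xs) x + of_bool (f (xs ! fst p) (xs ! snd p) = x)" by simp
  qed simp
  ultimately show ?thesis using c_idx[of xs x] s_idx[where xs=xs and f=f and x=x] by (simp add: sum.distrib)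
qed

lemma pairsums_middle:
  assumes "comm_groupoid f"
  shows "pairsums f (us @ a # vs) = image_mset (f a) (mset (us @ vs)) + pairsums f (us @ vs)"
proof (induct us)
  case Nil then show ?case by simp
next
  case (Cons u us)
  have "f u a = f a u" using assms by (simp add: comm_groupoid_def)
  then show ?case using Cons by (simp add: ac_simps)
qed

lemma pairsums_perm:
  assumes "comm_groupoid f"
  shows "mset xs = mset ys \<Longrightarrow> pairsums f xs = pairsums f ys"
proof (induct xs arbitrary: ys)
  case Nil then show ?case by simp
next
  case (Cons a as)
  then have "a \<in> set ys" by (metis list.set_intros(1) set_mset_mset)
  then obtain us vs where ys: "ys = us @ a # vs" by (meson split_list)
  have m: "mset as = mset (us @ vs)" using Cons.prems ys by simp
  show ?case unfolding ys pairsums_middle[OF assms] using Cons.hyps[OF m] m by simp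
qed

lemma count_two_le: "z1 \<noteq> z2 \<Longrightarrow> count A z1 + count A z2 \<le> size A"
  by (induct A) auto

lemma deck_eq_list: "deck f M = deck_list f (SOME xs. mset xs = M)" "mset (SOME xs. mset xs = M) = M"
  by (simp add: deck_def) (rule someI_ex[OF ex_mset])

theorem mainTheorem3:
  fixes f :: "'a \<Rightarrow> 'a \<Rightarrow> 'a" and M M' :: "'a multiset"
  assumes "comm_groupoid f"
    and "size M = size M'"
    and "size M \<ge> 5"
  shows "deck f M = deck f M' \<longleftrightarrow> M = M'"
proof
  assume deq: "deck f M = deck f M'"
  define xs where "xs = (SOME xs. mset xs = M)"
  define ys where "ys = (SOME xs. mset xs = M')"
  have mx: "mset xs = M" and my: "mset ys = M'" using deck_eq_list unfolding xs_def ys_def by auto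
  have dx: "deck f M = deck_list f xs" and dy: "deck f M' = deck_list f ys"
    using deck_eq_list unfolding xs_def ys_def by auto
  define n where "n = size M"
  have lx: "length xs = n" using mx n_def by (metis size_mset)
  have ly: "length ys = n" using my n_def assms(2) by (metis size_mset)
  define N where "N = card (pairs_upto n)"
  have N2: "2 * N = n * (n - 1)" using card_pairs_upto N_def by simp
  have n5: "n \<ge> 5" using assms(3) n_def by simp
  have "n * (n - 1) \<ge> 5 * (n - 1)" using n5 by simp
  then have Nbig: "N > 2 * (n - 1)" using N2 n5 by linarith
  define K where "K = N - (n - 1)"
  have NK: "N = K + (n - 1)" using Nbig K_def by simp
  have K1: "K > n - 1" and K2: "2 * K > N" using Nbig NK by linarith+
  define c where "c = count M"
  define c' where "c' = count M'"
  define s where "s = count (pairsums f xs)"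
  define s' where "s' = count (pairsums f ys)"
  have eq: "K * c z + s z = K * c' z + s' z" for z
  proof -
    have a: "sum_mset (image_mset (\<lambda>C. count C z) (deck f M)) + (n - 1) * c z = N * c z + s z"
      using T_deck[of z f xs] unfolding dx lx mx N_def c_def s_def .
    have b: "sum_mset (image_mset (\<lambda>C. count C z) (deck f M)) + (n - 1) * c' z = N * c' z + s' z"
      using T_deck[of z f ys] unfolding deq dy ly my N_def c'_def s'_def .
    from a b show ?thesis unfolding NK by (simp add: algebra_simps)
  qed
  have sizes: "size (pairsums f ys) = N" "size (pairsums f xs) = N"
    using size_pairsums[of f ys] size_pairsums[of f xs] lx ly N_def by simp_all
  have s'N: "s' z \<le> N" for z using count_le_size sizes s'_def by metis
  have s'2: "z1 \<noteq> z2 \<Longrightarrow> s' z1 + s' z2 \<le> N" for z1 z2 using count_two_le sizes s'_def by metis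
  have sN: "s z \<le> N" for z using count_le_size sizes s_def by metis
  have s2: "z1 \<noteq> z2 \<Longrightarrow> s z1 + s z2 \<le> N" for z1 z2 using count_two_le sizes s_def by metis
  have bigx: "s' z \<ge> K" if "c' z < c z" for z
  proof -
    have "K * c z \<ge> K * c' z + K" using that by (metis Suc_le_eq mult_Suc_right mult_le_mono2 add.commute)
    then show ?thesis using eq[of z] by linarith
  qed
  have bigy: "s z \<ge> K" if "c z < c' z" for z
  proof -
    have "K * c' z \<ge> K * c z + K" using that by (metis Suc_le_eq mult_Suc_right mult_le_mono2 add.commute)
    then show ?thesis using eq[of z] by linarith
  qed
  show "M = M'"
  proof (rule ccontr)
    assume ne: "M \<noteq> M'"
    have "\<exists>x. c' x < c x"
    proof (rule ccontr)
      assume "\<not> ?thesis"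
      then have "M \<subseteq># M'" unfolding c_def c'_def by (simp add: subseteq_mset_def not_less)
      then have "M \<subset># M'" using ne by simp
      then have "size M < size M'" by (rule mset_subset_size)
      then show False using assms(2) by simp
    qed
    then obtain x where x: "c' x < c x" by blast
    have "\<exists>y. c y < c' y"
    proof (rule ccontr)
      assume "\<not> ?thesis"
      then have "M' \<subseteq># M" unfolding c_def c'_def by (simp add: subseteq_mset_def not_less)
      then have "M' \<subset># M" using ne by simp
      then have "size M' < size M" by (rule mset_subset_size)
      then show False using assms(2) by simp
    qed
    then obtain y where y: "c y < c' y" by blast
    have xy: "x \<noteq> y" using x y by auto
    have cx: "c x = c' x + 1"
    proof (rule ccontr)
      assume "c x \<noteq> c' x + 1"
      then have "c x \<ge> c' x + 2" using x by simp
      then have "K * c x \<ge> K * c' x + 2 * K" by (metis add_mult_distrib2 mult.commute mult_le_mono2)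
      then have "s' x \<ge> 2 * K" using eq[of x] by linarith
      then show False using s'N[of x] K2 by linarith
    qed
    have ox: "c z \<le> c' z" if "z \<noteq> x" for z
    proof (rule ccontr)
      assume "\<not> c z \<le> c' z"
      then have "s' z \<ge> K" using bigx by simp
      then show False using bigx[OF x] s'2[OF that] K2 by linarith
    qed
    have cy: "c' y = c y + 1"
    proof (rule ccontr)
      assume "c' y \<noteq> c y + 1"
      then have "c' y \<ge> c y + 2" using y by simp
      then have "K * c' y \<ge> K * c y + 2 * K" by (metis add_mult_distrib2 mult.commute mult_le_mono2)
      then have "s y \<ge> 2 * K" using eq[of y] by linarith
      then show False using sN[of y] K2 by linarith
    qed
    have oy: "c' z \<le> c z" if "z \<noteq> y" for z
    proof (rule ccontr)
      assume "\<not> c' z \<le> c z"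
      then have "s z \<ge> K" using bigy by simp
      then show False using bigy[OF y] s2[OF that] K2 by linarith
    qed
    have R: "M - {#x#} = M' - {#y#}"
    proof (rule multiset_eqI)
      fix z
      show "count (M - {#x#}) z = count (M' - {#y#}) z"
      proof (cases "z = x")
        case True then show ?thesis using cx xy unfolding c_def c'_def by simp
      next
        case False
        note F = False
        show ?thesis
        proof (cases "z = y")
          case True then show ?thesis using cy xy unfolding c_def c'_def by simp
        next
          case False
          then show ?thesis using ox[OF F] oy[OF False] F False unfolding c_def c'_def by simp
        qed
      qed
    qed
    obtain rs where rs: "mset rs = M - {#x#}" using ex_mset by blast
    have xin: "x \<in># M" using cx c_def by (simp add: count_greater_zero_iff[symmetric])
    have yin: "y \<in># M'" using cy c'_def by (simp add: count_greater_zero_iff[symmetric])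
    have m1: "mset (x # rs) = mset xs" using rs xin mx by simp
    have m2: "mset (y # rs) = mset ys" using rs R yin my by simp
    have lrs: "length rs = n - 1" using m1 lx by (metis length_Cons size_mset diff_Suc_1)
    have "s x = count (pairsums f (x # rs)) x"
      unfolding s_def using pairsums_perm[OF assms(1) m1] by simp
    then have sx: "s x \<ge> count (pairsums f rs) x" by simp
    have "s' x = count (pairsums f (y # rs)) x"
      unfolding s'_def using pairsums_perm[OF assms(1) m2] by simp
    also have "\<dots> = count (image_mset (f y) (mset rs)) x + count (pairsums f rs) x" by simp
    also have "\<dots> \<le> (n - 1) + count (pairsums f rs) x"
      using count_le_size[of "image_mset (f y) (mset rs)" x] lrs by simp
    finally have "s' x \<le> (n - 1) + s x" using sx by linarith
    moreover have "s' x = K + s x" using eq[of x] cx by (simp add: algebra_simps)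
    ultimately show False using K1 by linarith
  qed
next
  assume "M = M'"
  then show "deck f M = deck f M'" by simp
qed

end
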